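(* Let $x_1,\dots,x_n\in\mathbb{R}^d\setminus\{0\}$, and fix $\beta>0$ and $b>0$. The function $g:\mathbb{P}_d\to\mathbb{R}_{++}$ defined by $g(\Sigma)=\sum_{i=1}^n\left(\frac{x_i^\top\Sigma^{-1}x_i}{b}\right)^{\beta}$ is Euclidean convex and geodesically convex on $\mathbb{P}_d$.
   Context: $\mathbb{P}_d$ denotes the set of real symmetric $d\times d$ positive definite matrices, equipped with the affine-invariant Riemannian metric $\langle U,V\rangle_X=\operatorname{tr}(X^{-1}UX^{-1}V)$, whose geodesic from $A$ to $B$ is $\gamma(t)=A^{1/2}(A^{-1/2}BA^{-1/2})^tA^{1/2}$, $t\in[0,1]$. Geodesically convex means $t\mapsto g(\gamma(t))$ is convex on $[0,1]$ for every such geodesic; Euclidean convex means convex in the usual sense on the convex set $\mathbb{P}_d$. *)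

theory Defs
  imports "HOL-Analysis.Analysis"
begin

definition spd :: "real^'d^'d \<Rightarrow> bool" where
  "spd A \<longleftrightarrow> transpose A = A \<and> (\<forall>v. v \<noteq> 0 \<longrightarrow> v \<bullet> (A *v v) > 0)"

definition PD :: "(real^'d^'d) set" where
  "PD = {A. spd A}"

definition diag_mat :: "('d \<Rightarrow> real) \<Rightarrow> real^'d^'d" where
  "diag_mat l = (\<chi> i j. if i = j then l i else 0)"

text \<open>Real power A^t of an SPD matrix via its spectral decomposition
  A = U diag(l) U^T (U orthogonal, l > 0): A^t = U diag(l^t) U^T.
  (Well defined since the decomposition exists and the result is independent of it.)\<close>
definition mpow :: "real^'d^'d \<Rightarrow> real \<Rightarrow> real^'d^'d" where
  "mpow A t = (SOME B. \<exists>U l. orthogonal_matrix U \<and> (\<forall>i. l i > 0) \<and>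
      A = U ** diag_mat l ** transpose U \<and>
      B = U ** diag_mat (\<lambda>i. l i powr t) ** transpose U)"

text \<open>Affine-invariant geodesic from A to B:
  gamma(t) = A^(1/2) (A^(-1/2) B A^(-1/2))^t A^(1/2).\<close>
definition geod :: "real^'d^'d \<Rightarrow> real^'d^'d \<Rightarrow> real \<Rightarrow> real^'d^'d" where
  "geod A B t = mpow A (1/2) ** mpow (mpow A (-1/2) ** B ** mpow A (-1/2)) t ** mpow A (1/2)"

definition geodesically_convex :: "(real^'d^'d \<Rightarrow> real) \<Rightarrow> bool" where
  "geodesically_convex g \<longleftrightarrow>
     (\<forall>A B. spd A \<longrightarrow> spd B \<longrightarrow> convex_on {0..1} (\<lambda>t. g (geod A B t)))"

end

theory Submission
  imports Defs
begin

lemma amgm: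
  fixes p q u v :: real
  assumes "p > 0" "q > 0" "u \<ge> 0" "v \<ge> 0" "u + v = 1"
  shows "p powr u * q powr v \<le> u * p + v * q"
proof -
  have "p powr u * q powr v = exp (u * ln p + v * ln q)"
    using assms by (simp add: powr_def exp_add)
  also have "\<dots> \<le> u * exp (ln p) + v * exp (ln q)"
  proof -
    have u: "u = 1 - v" using assms by simp
    have "exp ((1 - v) *\<^sub>R ln p + v *\<^sub>R ln q) \<le> (1 - v) * exp (ln p) + v * exp (ln q)"
      using convex_onD[OF exp_convex, of v "ln p" "ln q"] assms by simp
    then show ?thesis using u by simp
  qed
  also have "\<dots> = u * p + v * q" using assms by simp
  finally show ?thesis .
qed

lemma convex_on_sum_fun:
  assumes "convex S" "\<And>i. i \<in> I \<Longrightarrow> convex_on S (f i)"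
  shows "convex_on S (\<lambda>x. \<Sum>i\<in>I. f i x)"
  unfolding convex_on_def
proof (intro conjI ballI allI impI assms(1))
  fix x y u v assume xy: "x \<in> S" "y \<in> S" and uv: "(0::real) \<le> u" "0 \<le> v" "u + v = 1"
  have "(\<Sum>i\<in>I. f i (u *\<^sub>R x + v *\<^sub>R y)) \<le> (\<Sum>i\<in>I. u * f i x + v * f i y)"
    apply (rule sum_mono) using assms(2) xy uv unfolding convex_on_def by blast
  also have "\<dots> = u * (\<Sum>i\<in>I. f i x) + v * (\<Sum>i\<in>I. f i y)"
    by (simp add: sum.distrib sum_distrib_left)
  finally show "(\<Sum>i\<in>I. f i (u *\<^sub>R x + v *\<^sub>R y)) \<le> u * (\<Sum>i\<in>I. f i x) + v * (\<Sum>i\<in>I. f i y)" .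
qed

lemma diag_mat_right: "(M ** diag_mat l) $ i $ j = M $ i $ j * l j"
  unfolding diag_mat_def matrix_matrix_mult_def
  by (simp add: if_distrib if_distribR sum.delta cong: if_cong)

lemma diag_mat_left: "(diag_mat l ** M) $ i $ j = l i * M $ i $ j"
  unfolding diag_mat_def matrix_matrix_mult_def
  by (simp add: if_distrib if_distribR sum.delta cong: if_cong)

lemma diag_mat_mult: "diag_mat l ** diag_mat m = diag_mat (\<lambda>i. l i * m i)"
  by (simp add: vec_eq_iff diag_mat_left) (simp add: diag_mat_def)

lemma diag_mat_one: "diag_mat (\<lambda>i. 1) = mat 1"
  by (simp add: diag_mat_def mat_def)

lemma transpose_diag_mat [simp]: "transpose (diag_mat l) = diag_mat l"
  by (simp add: diag_mat_def transpose_def vec_eq_iff)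

lemma diag_mat_vec: "(diag_mat l *v v) $ i = l i * v $ i"
  unfolding diag_mat_def matrix_vector_mult_def
  by (simp add: if_distrib if_distribR sum.delta cong: if_cong)

lemma matrix_inv_eq:
  fixes A B :: "real^'n^'n"
  assumes "A ** B = mat 1"
  shows "matrix_inv A = B"
proof -
  have BA: "B ** A = mat 1" using assms matrix_left_right_inverse by blast
  have ex: "\<exists>A'. A ** A' = mat 1 \<and> A' ** A = mat 1" using assms BA by blast
  have "A ** matrix_inv A = mat 1 \<and> matrix_inv A ** A = mat 1"
    unfolding matrix_inv_def by (rule someI_ex[OF ex])
  then have H: "matrix_inv A ** A = mat 1" by blast
  have "matrix_inv A = matrix_inv A ** (A ** B)" by (simp add: assms)
  also have "\<dots> = (matrix_inv A ** A) ** B" by (simp add: matrix_mul_assoc)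
  also have "\<dots> = B" using H by simp
  finally show ?thesis .
qed

lemma orth_right: "orthogonal_matrix (U::real^'n^'n) \<Longrightarrow> U ** transpose U = mat 1"
  by (simp add: orthogonal_matrix_def)
lemma orth_left: "orthogonal_matrix (U::real^'n^'n) \<Longrightarrow> transpose U ** U = mat 1"
  by (simp add: orthogonal_matrix_def)

lemma fcalc_unique:
  fixes U V :: "real^'n^'n"
  assumes U: "orthogonal_matrix U" and V: "orthogonal_matrix V"
    and eq: "U ** diag_mat l ** transpose U = V ** diag_mat m ** transpose V"
  shows "U ** diag_mat (\<lambda>i. f (l i)) ** transpose U = V ** diag_mat (\<lambda>i. f (m i)) ** transpose V"
proof -
  define W where "W = transpose V ** U"
  have "transpose V ** (U ** diag_mat l ** transpose U) ** U = transpose V ** (V ** diag_mat m ** transpose V) ** U"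
    using eq by simp
  then have WD: "W ** diag_mat l = diag_mat m ** W"
    using U V unfolding W_def
    by (simp add: matrix_mul_assoc orth_left orth_right)
       (metis matrix_mul_assoc matrix_mul_lid matrix_mul_rid orth_left orth_right U V)
  have "W ** diag_mat (\<lambda>i. f (l i)) = diag_mat (\<lambda>i. f (m i)) ** W"
  proof -
    have "W $ i $ j * f (l j) = f (m i) * W $ i $ j" for i j
    proof -
      have "W $ i $ j * l j = m i * W $ i $ j"
        using WD by (metis diag_mat_left diag_mat_right)
      then show ?thesis by (cases "W $ i $ j = 0") auto
    qed
    then show ?thesis by (simp add: vec_eq_iff diag_mat_left diag_mat_right)
  qed
  moreover have UVW: "U = V ** W" unfolding W_def using V
    by (simp add: matrix_mul_assoc orth_right)
  ultimately show ?thesis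
    by (metis (no_types, lifting) W_def matrix_mul_assoc matrix_mul_rid matrix_transpose_mul orth_right U)
qed


lemma symdot:
  fixes A :: "real^'n^'n"
  assumes "transpose A = A"
  shows "x \<bullet> (A *v y) = (A *v x) \<bullet> y"
  by (metis assms dot_lmul_matrix transpose_matrix_vector)

lemma quad_scale:
  fixes A :: "real^'n^'n"
  shows "(c *\<^sub>R u) \<bullet> (A *v (c *\<^sub>R u)) = c^2 * (u \<bullet> (A *v u))"
  by (simp add: matrix_vector_mult_scaleR power2_eq_square)

lemma quad_small:
  fixes K M :: real
  assumes "K > 0" "\<forall>s. 2 * s * K + s^2 * M \<le> 0"
  shows False
proof -
  define s where "s = K / (\<bar>M\<bar> + 1)"
  have s0: "s > 0" using assms by (simp add: s_def)
  have "s * \<bar>M\<bar> \<le> K" unfolding s_def using assms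
    by (simp add: field_simps)
  moreover have "s * (- M) \<le> s * \<bar>M\<bar>"
    using mult_left_mono[OF abs_ge_minus_self[of M], of s] s0 by simp
  ultimately have "2 * K + s * M > 0" using assms(1) by simp
  then have "s * (2 * K + s * M) > 0" using s0 by simp
  moreover have "s * (2 * K + s * M) = 2 * s * K + s^2 * M" by (simp add: algebra_simps power2_eq_square)
  ultimately show False using assms(2) by (metis not_le)
qed

lemma eigen_step:
  fixes A :: "real^'n^'n"
  assumes sym: "transpose A = A" and fin: "finite S" and cS: "card S < CARD('n)"
    and eig: "\<forall>s\<in>S. \<exists>\<mu>. A *v s = \<mu> *\<^sub>R s"
  obtains v where "norm v = 1" "\<forall>s\<in>S. v \<bullet> s = 0" "\<exists>\<mu>. A *v v = \<mu> *\<^sub>R v"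
proof -
  define W where "W = {w::real^'n. \<forall>s\<in>S. w \<bullet> s = 0}"
  define K where "K = W \<inter> sphere 0 1"
  define q where "q = (\<lambda>w::real^'n. w \<bullet> (A *v w))"
  have "W = (\<Inter>s\<in>S. {w. s \<bullet> w = 0})" by (auto simp: W_def inner_commute)
  then have Wc: "closed W" by (simp add: closed_INT closed_hyperplane)
  have Kc: "compact K" unfolding K_def using Wc by (simp add: compact_Int_closed closed_Int_compact)
  have dimS: "dim S < DIM(real^'n)" using dim_le_card[of S S] fin cS by (simp add: span_base subsetI)
  then obtain x0 where x0: "x0 \<noteq> 0" "\<And>y. y \<in> span S \<Longrightarrow> orthogonal x0 y"
    using orthogonal_to_subspace_exists[OF dimS] by metis
  have "(1 / norm x0) *\<^sub>R x0 \<in> K"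
    using x0 unfolding K_def W_def by (auto simp: orthogonal_def span_base)
  then have Kne: "K \<noteq> {}" by blast
  have qc: "continuous_on K q" unfolding q_def by (intro continuous_intros)
  obtain v where vK: "v \<in> K" and vmax: "\<forall>y\<in>K. q y \<le> q v"
    using continuous_attains_sup[OF Kc Kne qc] by blast
  define lam where "lam = q v"
  have vW: "v \<in> W" and nv: "norm v = 1" using vK by (auto simp: K_def)
  have vv: "v \<bullet> v = 1" using nv by (simp add: dot_square_norm)
  have Wsub: "\<And>a b c d. a \<in> W \<Longrightarrow> b \<in> W \<Longrightarrow> c *\<^sub>R a + d *\<^sub>R b \<in> W"
    unfolding W_def by (auto simp: inner_add_left)
  have AW: "A *v w \<in> W" if "w \<in> W" for w
    unfolding W_def
  proof (intro CollectI ballI)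
    fix s assume "s \<in> S"
    then obtain \<mu> where "A *v s = \<mu> *\<^sub>R s" using eig by blast
    then have "(A *v w) \<bullet> s = w \<bullet> (\<mu> *\<^sub>R s)" by (metis symdot[OF sym])
    then show "(A *v w) \<bullet> s = 0" using that \<open>s \<in> S\<close> unfolding W_def by simp
  qed
  have qle: "q u \<le> lam * (u \<bullet> u)" if "u \<in> W" for u
  proof (cases "u = 0")
    case True then show ?thesis by (simp add: q_def)
  next
    case False
    have "(1 / norm u) *\<^sub>R u \<in> K" using that False Wsub[of u u "1/norm u" 0]
      by (auto simp: K_def)
    then have "q ((1 / norm u) *\<^sub>R u) \<le> lam" using vmax lam_def by blast
    then have "(1 / norm u)^2 * q u \<le> lam" unfolding q_def by (simp only: quad_scale)
    then have "q u \<le> lam * (norm u)^2" using False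
      by (simp add: field_simps power2_eq_square)
    then show ?thesis by (simp add: dot_square_norm)
  qed
  define w where "w = A *v v - lam *\<^sub>R v"
  have wW: "w \<in> W" unfolding w_def using Wsub[OF AW[OF vW] vW, of 1 "-lam"] by simp
  have wv: "w \<bullet> v = 0" unfolding w_def lam_def q_def
    by (simp add: inner_diff_left vv) (metis symdot[OF sym] inner_commute)
  have wAv: "w \<bullet> (A *v v) = w \<bullet> w"
  proof -
    have e: "A *v v - lam *\<^sub>R v = w" by (simp add: w_def)
    have "w \<bullet> (A *v v - lam *\<^sub>R v) = w \<bullet> (A *v v) - lam * (w \<bullet> v)" by (simp add: inner_diff_right)
    then show ?thesis using e wv by simp
  qed
  have w0: "w = 0"
  proof (rule ccontr)
    assume "w \<noteq> 0"
    then have Kp: "w \<bullet> w > 0" by simp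
    have "\<forall>s. 2 * s * (w \<bullet> w) + s^2 * (q w - lam * (w \<bullet> w)) \<le> 0"
    proof
      fix s
      have uW: "v + s *\<^sub>R w \<in> W" using Wsub[OF vW wW, of 1 s] by simp
      have "q (v + s *\<^sub>R w) = q v + 2 * s * (w \<bullet> (A *v v)) + s^2 * q w"
        unfolding q_def
        by (simp add: matrix_vector_right_distrib matrix_vector_mult_scaleR inner_add_left inner_add_right
            power2_eq_square algebra_simps symdot[OF sym, of v w] inner_commute)
      moreover have "(v + s *\<^sub>R w) \<bullet> (v + s *\<^sub>R w) = 1 + s^2 * (w \<bullet> w)"
        using wv by (simp add: inner_add_left inner_add_right vv inner_commute power2_eq_square)
      ultimately show "2 * s * (w \<bullet> w) + s^2 * (q w - lam * (w \<bullet> w)) \<le> 0"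
        using qle[OF uW] wAv lam_def by (simp add: algebra_simps)
    qed
    then show False using quad_small[OF Kp] by blast
  qed
  show ?thesis
  proof
    show "norm v = 1" by (rule nv)
    show "\<forall>s\<in>S. v \<bullet> s = 0" using vW by (simp add: W_def)
    show "\<exists>\<mu>. A *v v = \<mu> *\<^sub>R v" using w0 by (auto simp: w_def)
  qed
qed


lemma eigen_sets:
  fixes A :: "real^'n^'n"
  assumes sym: "transpose A = A"
  shows "k \<le> CARD('n) \<Longrightarrow> \<exists>S. finite S \<and> card S = k \<and> (\<forall>s\<in>S. norm s = 1 \<and> (\<exists>\<mu>. A *v s = \<mu> *\<^sub>R s))
           \<and> (\<forall>s\<in>S. \<forall>t\<in>S. s \<noteq> t \<longrightarrow> s \<bullet> t = 0)"
proof (induction k)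
  case 0
  show ?case by (rule exI[of _ "{}"]) simp
next
  case (Suc k)
  then obtain S where S: "finite S" "card S = k" "\<forall>s\<in>S. norm s = 1 \<and> (\<exists>\<mu>. A *v s = \<mu> *\<^sub>R s)"
    "\<forall>s\<in>S. \<forall>t\<in>S. s \<noteq> t \<longrightarrow> s \<bullet> t = 0" by auto
  obtain v where v: "norm v = 1" "\<forall>s\<in>S. v \<bullet> s = 0" "\<exists>\<mu>. A *v v = \<mu> *\<^sub>R v"
    using eigen_step[OF sym S(1)] S Suc.prems by auto
  have vS: "v \<notin> S"
  proof
    assume "v \<in> S"
    then have "v \<bullet> v = 0" using v(2) by blast
    then show False using v(1) by simp
  qed
  show ?case
  proof (rule exI[of _ "insert v S"], intro conjI)
    show "finite (insert v S)" using S by simp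
    show "card (insert v S) = Suc k" using S vS by simp
    show "\<forall>s\<in>insert v S. norm s = 1 \<and> (\<exists>\<mu>. A *v s = \<mu> *\<^sub>R s)" using S v by auto
    show "\<forall>s\<in>insert v S. \<forall>t\<in>insert v S. s \<noteq> t \<longrightarrow> s \<bullet> t = 0"
      using S v by (auto simp: inner_commute)
  qed
qed

lemma mult_entry_column: "(A ** B) $ i $ j = (A *v column j B) $ i"
  by (simp add: matrix_matrix_mult_def matrix_vector_mult_def column_def)

lemma spectral:
  fixes A :: "real^'n^'n"
  assumes sym: "transpose A = A"
  shows "\<exists>U l. orthogonal_matrix U \<and> A = U ** diag_mat l ** transpose U"
proof -
  obtain S where S: "finite S" "card S = CARD('n)" "\<forall>s\<in>S. norm s = 1 \<and> (\<exists>\<mu>. A *v s = \<mu> *\<^sub>R s)"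
    "\<forall>s\<in>S. \<forall>t\<in>S. s \<noteq> t \<longrightarrow> s \<bullet> t = 0"
    using eigen_sets[OF sym, of "CARD('n)"] by auto
  obtain f where f: "bij_betw f (UNIV::'n set) S"
    using bij_betw_iff_card[of "UNIV::'n set" S] S by auto
  have fS: "f i \<in> S" for i using f by (auto simp: bij_betw_def)
  have fn: "norm (f i) = 1" for i using S fS by blast
  have fo: "i \<noteq> j \<Longrightarrow> f i \<bullet> f j = 0" for i j
    using S(4) fS f by (metis bij_betw_def inj_def)
  define l where "l = (\<lambda>j. f j \<bullet> (A *v f j))"
  have fe: "A *v f j = l j *\<^sub>R f j" for j
  proof -
    obtain \<mu> where "A *v f j = \<mu> *\<^sub>R f j" using S fS by blast
    moreover have "f j \<bullet> f j = 1" using fn[of j] by (simp add: dot_square_norm)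
    ultimately show ?thesis unfolding l_def by simp
  qed
  define U where "U = (\<chi> i j. f j $ i)"
  have colU: "column j U = f j" for j by (simp add: U_def column_def vec_eq_iff)
  have oU: "orthogonal_matrix U"
    by (simp add: orthogonal_matrix_orthonormal_columns colU fn fo orthogonal_def)
  have "(A ** U) $ i $ j = (U ** diag_mat l) $ i $ j" for i j
  proof -
    have "(A ** U) $ i $ j = l j * f j $ i" by (simp only: mult_entry_column colU fe) simp
    also have "\<dots> = (U ** diag_mat l) $ i $ j" by (simp add: diag_mat_right U_def)
    finally show ?thesis .
  qed
  then have "A ** U = U ** diag_mat l" by (simp add: vec_eq_iff)
  then have "A ** U ** transpose U = U ** diag_mat l ** transpose U" by simp
  then have "A = U ** diag_mat l ** transpose U"
    using oU by (simp add: orth_right flip: matrix_mul_assoc)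
  then show ?thesis using oU by blast
qed


lemma dot_mat_left:
  fixes U :: "real^'n^'n"
  shows "v \<bullet> (U *v y) = (transpose U *v v) \<bullet> y"
  by (simp add: dot_lmul_matrix)

lemma quad_diag: "z \<bullet> (diag_mat l *v z) = (\<Sum>j\<in>UNIV. l j * (z $ j)^2)"
  by (simp add: inner_vec_def diag_mat_vec power2_eq_square mult.commute mult.left_commute)

lemma orth_cancel1: "orthogonal_matrix U \<Longrightarrow> transpose U *v (U *v x) = (x::real^'n)"
  by (simp only: matrix_vector_mul_assoc orth_left matrix_vector_mul_lid)

lemma orth_cancel2: "orthogonal_matrix U \<Longrightarrow> U *v (transpose U *v x) = (x::real^'n)"
  by (simp only: matrix_vector_mul_assoc orth_right matrix_vector_mul_lid)

lemma decomp_spd: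
  fixes U :: "real^'n^'n"
  assumes U: "orthogonal_matrix U" and l: "\<forall>i. l i > 0"
  shows "spd (U ** diag_mat l ** transpose U)"
  unfolding spd_def
proof (intro conjI allI impI)
  show "transpose (U ** diag_mat l ** transpose U) = U ** diag_mat l ** transpose U"
    by (simp add: matrix_transpose_mul matrix_mul_assoc)
  fix v :: "real^'n" assume v: "v \<noteq> 0"
  define z where "z = transpose U *v v"
  have z0: "z \<noteq> 0"
  proof
    assume "z = 0"
    then have "U *v z = 0" by simp
    moreover have "U *v z = v" unfolding z_def using U by (rule orth_cancel2)
    ultimately show False using v by simp
  qed
  then obtain j where j: "z $ j \<noteq> 0" by (metis vec_eq_iff zero_index)
  have "v \<bullet> ((U ** diag_mat l ** transpose U) *v v) = z \<bullet> (diag_mat l *v z)"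
    unfolding z_def by (simp add: dot_mat_left flip: matrix_vector_mul_assoc)
  also have "\<dots> = (\<Sum>j\<in>UNIV. l j * (z $ j)^2)" by (rule quad_diag)
  also have "\<dots> > 0"
  proof (rule sum_pos2[of UNIV j])
    show "0 < l j * (z $ j)^2" using l j by simp
    show "\<And>i. i \<in> UNIV \<Longrightarrow> 0 \<le> l i * (z $ i)^2" using l by (simp add: less_imp_le)
  qed auto
  finally show "v \<bullet> ((U ** diag_mat l ** transpose U) *v v) > 0" .
qed

lemma spd_decomp:
  fixes A :: "real^'n^'n"
  assumes "spd A"
  obtains U l where "orthogonal_matrix U" "\<forall>i. l i > 0" "A = U ** diag_mat l ** transpose U"
proof -
  have sym: "transpose A = A" using assms by (simp add: spd_def)
  obtain U l where U: "orthogonal_matrix U" and A: "A = U ** diag_mat l ** transpose U"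
    using spectral[OF sym] by blast
  have "l i > 0" for i
  proof -
    define e where "e = U *v axis i (1::real)"
    have e0: "e \<noteq> 0"
    proof
      assume "e = 0"
      then have "transpose U *v e = 0" by simp
      then show False using orth_cancel1[OF U] e_def by (simp add: axis_eq_0_iff)
    qed
    have "diag_mat l *v axis i 1 = l i *\<^sub>R axis i (1::real)"
      by (simp add: vec_eq_iff diag_mat_vec axis_def)
    then have "A *v e = l i *\<^sub>R e"
      unfolding A e_def using orth_cancel1[OF U]
      by (simp add: matrix_vector_mult_scaleR flip: matrix_vector_mul_assoc)
    then have "e \<bullet> (A *v e) = l i * (e \<bullet> e)" by simp
    moreover have "e \<bullet> (A *v e) > 0" using assms e0 by (simp add: spd_def)
    moreover have "e \<bullet> e > 0" using e0 by simp
    ultimately show ?thesis by (simp add: zero_less_mult_iff)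
  qed
  then show ?thesis using that U A by blast
qed

lemma mpow_eq:
  fixes A U :: "real^'n^'n"
  assumes U: "orthogonal_matrix U" and l: "\<forall>i. l i > 0" and A: "A = U ** diag_mat l ** transpose U"
  shows "mpow A t = U ** diag_mat (\<lambda>i. l i powr t) ** transpose U"
proof -
  let ?P = "\<lambda>B. \<exists>U l. orthogonal_matrix U \<and> (\<forall>i. l i > 0) \<and>
      A = U ** diag_mat l ** transpose U \<and>
      B = U ** diag_mat (\<lambda>i. l i powr t) ** transpose U"
  have "?P (U ** diag_mat (\<lambda>i. l i powr t) ** transpose U)" using U l A by blast
  then have "?P (mpow A t)" unfolding mpow_def by (rule someI)
  then obtain U' l' where U': "orthogonal_matrix U'" and
    A': "A = U' ** diag_mat l' ** transpose U'" and
    B: "mpow A t = U' ** diag_mat (\<lambda>i. l' i powr t) ** transpose U'" by blast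
  show ?thesis unfolding B
    using fcalc_unique[OF U' U, of l' l "\<lambda>x. x powr t"] A A' by simp
qed


lemma final_step:
  fixes h h1 h2 b \<beta> u v :: real
  assumes pos: "h > 0" "h1 > 0" "h2 > 0" "b > 0" "\<beta> > 0" and uv: "u \<ge> 0" "v \<ge> 0" "u + v = 1"
    and le: "h \<le> h1 powr u * h2 powr v"
  shows "(h / b) powr \<beta> \<le> u * (h1 / b) powr \<beta> + v * (h2 / b) powr \<beta>"
proof -
  have bb: "b powr u * b powr v = b"
    using pos uv by (simp flip: powr_add)
  have "(h1 / b) powr u * (h2 / b) powr v = (h1 powr u * h2 powr v) / (b powr u * b powr v)"
    by (simp add: powr_divide)
  then have e1: "(h1 / b) powr u * (h2 / b) powr v = (h1 powr u * h2 powr v) / b" using bb by simp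
  have "h / b \<le> (h1 / b) powr u * (h2 / b) powr v"
    unfolding e1 using le pos by (simp add: divide_right_mono)
  then have "(h / b) powr \<beta> \<le> ((h1 / b) powr u * (h2 / b) powr v) powr \<beta>"
    using pos by (intro powr_mono2) auto
  also have "\<dots> = ((h1 / b) powr \<beta>) powr u * ((h2 / b) powr \<beta>) powr v"
    by (simp add: powr_mult powr_powr mult.commute)
  also have "\<dots> \<le> u * (h1 / b) powr \<beta> + v * (h2 / b) powr \<beta>"
    using pos uv by (intro amgm) auto
  finally show ?thesis .
qed

lemma holder_exp:
  fixes c a :: "'j \<Rightarrow> real"
  assumes fin: "finite J" and c: "\<And>j. c j \<ge> 0" and a: "\<And>j. a j > 0"
    and X: "X = (\<Sum>j\<in>J. c j * a j powr t)" and Y: "Y = (\<Sum>j\<in>J. c j * a j powr s)"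
    and Xp: "X > 0" and Yp: "Y > 0" and uv: "u \<ge> 0" "v \<ge> 0" "u + v = 1"
  shows "(\<Sum>j\<in>J. c j * a j powr (u * t + v * s)) \<le> X powr u * Y powr v"
proof -
  have "c j * a j powr (u * t + v * s) \<le> X powr u * Y powr v * (c j * (u * (a j powr t / X) + v * (a j powr s / Y)))" for j
  proof -
    have "a j powr (u * t + v * s) = (a j powr t) powr u * (a j powr s) powr v"
      by (simp add: powr_add powr_powr mult.commute)
    also have "\<dots> = X powr u * Y powr v * ((a j powr t / X) powr u * (a j powr s / Y) powr v)"
      using Xp Yp by (simp add: powr_divide)
    also have "\<dots> \<le> X powr u * Y powr v * (u * (a j powr t / X) + v * (a j powr s / Y))"
      using Xp Yp a[of j] uv by (intro mult_left_mono amgm) auto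
    finally show ?thesis using c[of j] by (simp add: mult_left_mono mult.left_commute)
  qed
  then have "(\<Sum>j\<in>J. c j * a j powr (u * t + v * s)) \<le>
      (\<Sum>j\<in>J. X powr u * Y powr v * (c j * (u * (a j powr t / X) + v * (a j powr s / Y))))"
    by (rule sum_mono)
  also have "\<dots> = X powr u * Y powr v * (u / X * (\<Sum>j\<in>J. c j * a j powr t) + v / Y * (\<Sum>j\<in>J. c j * a j powr s))"
    by (simp add: sum_distrib_left sum.distrib algebra_simps)
  also have "\<dots> = X powr u * Y powr v" using Xp Yp uv X Y by simp
  finally show ?thesis .
qed

lemma geod_conv:
  fixes c m :: "'j::finite \<Rightarrow> real"
  assumes c: "\<And>j. c j \<ge> 0" and m: "\<And>j. m j > 0" and b: "b > 0" and \<beta>: "\<beta> > 0"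
  shows "convex_on {0..1} (\<lambda>t::real. ((\<Sum>j\<in>UNIV. c j * m j powr (-t)) / b) powr \<beta>)"
proof (cases "\<forall>j. c j = 0")
  case True
  then show ?thesis by (simp add: convex_on_const)
next
  case False
  then obtain j0 where j0: "c j0 \<noteq> 0" by blast
  have Sp: "(\<Sum>j\<in>UNIV. c j * m j powr t) > 0" for t
  proof (rule sum_pos2[of UNIV j0])
    show "0 < c j0 * m j0 powr t" using c[of j0] j0 m[of j0] by simp
    show "\<And>i. i \<in> UNIV \<Longrightarrow> 0 \<le> c i * m i powr t" using c by simp
  qed auto
  show ?thesis
    unfolding convex_on_def
  proof (intro conjI ballI allI impI)
    show "convex {0..1::real}" by simp
    fix t s u v :: real assume uv: "0 \<le> u" "0 \<le> v" "u + v = 1"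
    have e: "- (u * t + v * s) = u * (-t) + v * (-s)" by simp
    have "(\<Sum>j\<in>UNIV. c j * m j powr (- (u *\<^sub>R t + v *\<^sub>R s))) \<le>
        (\<Sum>j\<in>UNIV. c j * m j powr (-t)) powr u * (\<Sum>j\<in>UNIV. c j * m j powr (-s)) powr v"
      unfolding real_scaleR_def e
      by (rule holder_exp[OF _ c m refl refl Sp Sp uv]) simp
    then show "((\<Sum>j\<in>UNIV. c j * m j powr (- (u *\<^sub>R t + v *\<^sub>R s))) / b) powr \<beta>
       \<le> u * ((\<Sum>j\<in>UNIV. c j * m j powr (-t)) / b) powr \<beta> + v * ((\<Sum>j\<in>UNIV. c j * m j powr (-s)) / b) powr \<beta>"
      by (rule final_step[OF Sp Sp Sp b \<beta> uv])
  qed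
qed


lemma transpose_add': "transpose (A + B) = transpose A + transpose (B::real^'n^'n)"
  by (simp add: transpose_def vec_eq_iff)

lemma convex_PD: "convex (PD :: (real^'n^'n) set)"
  unfolding convex_def PD_def
proof (intro ballI allI impI, simp)
  fix A B :: "real^'n^'n" and u v :: real
  assume A: "spd A" and B: "spd B" and uv: "0 \<le> u" "0 \<le> v" "u + v = 1"
  show "spd (u *\<^sub>R A + v *\<^sub>R B)"
    unfolding spd_def
  proof (intro conjI allI impI)
    show "transpose (u *\<^sub>R A + v *\<^sub>R B) = u *\<^sub>R A + v *\<^sub>R B"
      using A B by (simp add: transpose_add' transpose_scalar spd_def)
    fix w :: "real^'n" assume w: "w \<noteq> 0"
    have a: "w \<bullet> (A *v w) > 0" and b: "w \<bullet> (B *v w) > 0" using A B w by (auto simp: spd_def)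
    have "w \<bullet> ((u *\<^sub>R A + v *\<^sub>R B) *v w) = u * (w \<bullet> (A *v w)) + v * (w \<bullet> (B *v w))"
      by (simp add: matrix_vector_mult_add_rdistrib inner_add_right flip: scaleR_matrix_vector_assoc)
    also have "\<dots> > 0"
    proof (cases "u = 0")
      case True then show ?thesis using uv b by simp
    next
      case False then show ?thesis using uv a b
        by (metis add_pos_nonneg le_less mult_nonneg_nonneg mult_pos_pos)
    qed
    finally show "w \<bullet> ((u *\<^sub>R A + v *\<^sub>R B) *v w) > 0" .
  qed
qed

lemma decomp_mult:
  fixes U :: "real^'n^'n"
  assumes U: "orthogonal_matrix U"
  shows "(U ** diag_mat l ** transpose U) ** (U ** diag_mat m ** transpose U) = U ** diag_mat (\<lambda>i. l i * m i) ** transpose U"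
proof -
  have "(U ** diag_mat l ** transpose U) ** (U ** diag_mat m ** transpose U)
      = U ** (diag_mat l ** ((transpose U ** U) ** (diag_mat m ** transpose U)))"
    by (simp only: matrix_mul_assoc)
  also have "\<dots> = U ** ((diag_mat l ** diag_mat m) ** transpose U)"
    using U by (simp only: orth_left matrix_mul_lid matrix_mul_assoc)
  finally show ?thesis by (simp only: diag_mat_mult matrix_mul_assoc)
qed

lemma spd_inv:
  fixes S :: "real^'n^'n"
  assumes "spd S"
  shows "S ** matrix_inv S = mat 1" "spd (matrix_inv S)"
proof -
  obtain U l where U: "orthogonal_matrix U" and l: "\<forall>i. l i > 0" and S: "S = U ** diag_mat l ** transpose U"
    using spd_decomp[OF assms] by blast
  have "S ** (U ** diag_mat (\<lambda>i. 1 / l i) ** transpose U) = mat 1"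
  proof -
    have "(\<lambda>i. l i * (1 / l i)) = (\<lambda>i. 1)"
    proof (rule ext)
      fix i show "l i * (1 / l i) = 1" using l[rule_format, of i] by simp
    qed
    then show ?thesis unfolding S decomp_mult[OF U] using U by (simp only: diag_mat_one matrix_mul_rid orth_right)
  qed
  then have inv: "matrix_inv S = U ** diag_mat (\<lambda>i. 1 / l i) ** transpose U"
    by (rule matrix_inv_eq)
  then show "S ** matrix_inv S = mat 1" using \<open>S ** _ = mat 1\<close> by simp
  show "spd (matrix_inv S)" unfolding inv using U l by (intro decomp_spd) auto
qed

lemma cs_spd:
  fixes S :: "real^'n^'n"
  assumes "spd S"
  shows "(p \<bullet> (S *v q))^2 \<le> (p \<bullet> (S *v p)) * (q \<bullet> (S *v q))"
proof (cases "q = 0")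
  case True then show ?thesis by simp
next
  case False
  have sym: "transpose S = S" using assms by (simp add: spd_def)
  define a where "a = p \<bullet> (S *v p)"
  define c where "c = p \<bullet> (S *v q)"
  define d where "d = q \<bullet> (S *v q)"
  have d: "d > 0" using assms False by (simp add: spd_def d_def)
  have qp: "q \<bullet> (S *v p) = c" unfolding c_def by (metis symdot[OF sym] inner_commute)
  have nn: "(p + s *\<^sub>R q) \<bullet> (S *v (p + s *\<^sub>R q)) \<ge> 0" for s
    using assms by (cases "p + s *\<^sub>R q = 0") (auto simp: spd_def less_imp_le)
  have ex: "(p + s *\<^sub>R q) \<bullet> (S *v (p + s *\<^sub>R q)) = a + 2 * s * c + s^2 * d" for s
    unfolding a_def d_def c_def[symmetric]
    using qp by (simp add: matrix_vector_right_distrib matrix_vector_mult_scaleR inner_add_left inner_add_right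
        power2_eq_square algebra_simps c_def)
  have "0 \<le> a + 2 * (- c / d) * c + (- c / d)^2 * d" using nn[of "-c/d"] ex[of "-c/d"] by simp
  also have "\<dots> = a - c^2 / d" using d by (simp add: field_simps power2_eq_square)
  finally have "c^2 \<le> a * d" using d by (simp add: field_simps)
  then show ?thesis by (simp add: a_def c_def d_def)
qed

lemma euclid_term:
  fixes x :: "real^'n"
  assumes x: "x \<noteq> 0" and b: "b > 0" and \<beta>: "\<beta> > 0"
  shows "convex_on PD (\<lambda>S::real^'n^'n. ((x \<bullet> (matrix_inv S *v x)) / b) powr \<beta>)"
  unfolding convex_on_def
proof (intro conjI ballI allI impI convex_PD)
  fix S1 S2 :: "real^'n^'n" and u v :: real
  assume S1: "S1 \<in> PD" and S2: "S2 \<in> PD" and uv: "0 \<le> u" "0 \<le> v" "u + v = 1"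
  define S where "S = u *\<^sub>R S1 + v *\<^sub>R S2"
  have SP: "S \<in> PD" unfolding S_def using convex_PD S1 S2 uv unfolding convex_def by blast
  have s1: "spd S1" and s2: "spd S2" and s: "spd S" using S1 S2 SP by (auto simp: PD_def)
  define hf where "hf = (\<lambda>T::real^'n^'n. x \<bullet> (matrix_inv T *v x))"
  have hpos: "spd T \<Longrightarrow> hf T > 0" for T using spd_inv(2)[of T] x by (simp add: spd_def hf_def)
  have Sp: "spd T \<Longrightarrow> T *v (matrix_inv T *v x) = x" for T
    using spd_inv(1)[of T] by (simp add: matrix_vector_mul_assoc)
  define p where "p = matrix_inv S *v x"
  have symS: "transpose T = T" if "spd T" for T :: "real^'n^'n" using that by (simp add: spd_def)
  have key: "(hf S)^2 \<le> hf T * (p \<bullet> (T *v p))" if T: "spd T" for T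
  proof -
    define pt where "pt = matrix_inv T *v x"
    have "pt \<bullet> (T *v p) = (T *v pt) \<bullet> p" by (rule symdot[OF symS[OF T]])
    also have "\<dots> = hf S" unfolding pt_def hf_def p_def using Sp[OF T] by simp
    finally have e1: "pt \<bullet> (T *v p) = hf S" .
    have e2: "pt \<bullet> (T *v pt) = hf T" unfolding pt_def hf_def using Sp[OF T] by (simp add: inner_commute)
    show ?thesis using cs_spd[OF T, of pt p] e1 e2 by simp
  qed
  have hS: "hf S = u * (p \<bullet> (S1 *v p)) + v * (p \<bullet> (S2 *v p))"
  proof -
    have "hf S = p \<bullet> (S *v p)" unfolding hf_def p_def using Sp[OF s] by (simp add: inner_commute)
    then show ?thesis unfolding S_def
      by (simp add: matrix_vector_mult_add_rdistrib inner_add_right flip: scaleR_matrix_vector_assoc)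
  qed
  have h0: "hf S > 0" "hf S1 > 0" "hf S2 > 0" using hpos s s1 s2 by auto
  have k1: "(hf S)^2 / hf S1 \<le> p \<bullet> (S1 *v p)" using key[OF s1] h0 by (simp add: field_simps)
  have k2: "(hf S)^2 / hf S2 \<le> p \<bullet> (S2 *v p)" using key[OF s2] h0 by (simp add: field_simps)
  have "u * ((hf S)^2 / hf S1) + v * ((hf S)^2 / hf S2) \<le> hf S"
  proof -
    have "u * ((hf S)^2 / hf S1) + v * ((hf S)^2 / hf S2) \<le> u * (p \<bullet> (S1 *v p)) + v * (p \<bullet> (S2 *v p))"
      using k1 k2 uv by (intro add_mono mult_left_mono) auto
    then show ?thesis using hS by simp
  qed
  then have "hf S * (hf S * (u / hf S1 + v / hf S2)) \<le> hf S * 1"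
    by (simp add: algebra_simps power2_eq_square)
  then have "hf S * (u / hf S1 + v / hf S2) \<le> 1" using h0 mult_le_cancel_left_pos by simp
  then have r: "u / hf S1 + v / hf S2 \<le> 1 / hf S" using h0 by (simp add: le_divide_eq mult.commute)
  have "(1 / hf S1) powr u * (1 / hf S2) powr v \<le> u * (1 / hf S1) + v * (1 / hf S2)"
    using h0 uv by (intro amgm) auto
  with r have "1 / (hf S1 powr u * hf S2 powr v) \<le> 1 / hf S"
    using h0 by (simp add: powr_divide)
  moreover have "hf S1 powr u * hf S2 powr v > 0" using h0 by simp
  ultimately have le: "hf S \<le> hf S1 powr u * hf S2 powr v" using h0
    by (metis inverse_eq_divide inverse_le_iff_le)
  show "((x \<bullet> (matrix_inv (u *\<^sub>R S1 + v *\<^sub>R S2) *v x)) / b) powr \<beta>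
       \<le> u * ((x \<bullet> (matrix_inv S1 *v x)) / b) powr \<beta> + v * ((x \<bullet> (matrix_inv S2 *v x)) / b) powr \<beta>"
    using final_step[OF h0 b \<beta> uv le] unfolding hf_def S_def .
qed


lemma geod_form:
  fixes A B :: "real^'n^'n"
  assumes A: "spd A" and B: "spd B"
  shows "\<exists>(W::real^'n^'n) m. (\<forall>j. m j > 0) \<and>
     (\<forall>t y. y \<bullet> (matrix_inv (geod A B t) *v y) = (\<Sum>j\<in>UNIV. ((W *v y) $ j)^2 * m j powr (-t)))"
proof -
  obtain U l where U: "orthogonal_matrix U" and l: "\<forall>i. l i > 0" and Ad: "A = U ** diag_mat l ** transpose U"
    using spd_decomp[OF A] by blast
  define P where "P = U ** diag_mat (\<lambda>i. l i powr (1/2)) ** transpose U"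
  define Q where "Q = U ** diag_mat (\<lambda>i. l i powr (-1/2)) ** transpose U"
  have mP: "mpow A (1/2) = P" unfolding P_def by (rule mpow_eq[OF U l Ad])
  have mQ: "mpow A (-1/2) = Q" unfolding Q_def by (rule mpow_eq[OF U l Ad])
  have PQ: "P ** Q = mat 1"
  proof -
    have "(\<lambda>i. l i powr (1/2) * l i powr (-1/2)) = (\<lambda>i. 1)"
    proof (rule ext)
      fix i show "l i powr (1/2) * l i powr (-1/2) = 1" using l[rule_format, of i]
        by (simp flip: powr_add)
    qed
    then show ?thesis unfolding P_def Q_def decomp_mult[OF U]
      using U by (simp only: diag_mat_one matrix_mul_rid orth_right)
  qed
  have lp: "\<forall>i. 0 < l i powr (-1/2)"
  proof
    fix i show "0 < l i powr (-1/2)" using l[rule_format, of i] by simp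
  qed
  have Qs: "spd Q" unfolding Q_def by (rule decomp_spd[OF U lp])
  have QT: "transpose Q = Q" using Qs by (simp add: spd_def)
  define C where "C = Q ** B ** Q"
  have Cs: "spd C" unfolding spd_def
  proof (intro conjI allI impI)
    show "transpose C = C" unfolding C_def using B QT
      by (simp add: matrix_transpose_mul matrix_mul_assoc spd_def)
    fix w :: "real^'n" assume w: "w \<noteq> 0"
    have Qw: "Q *v w \<noteq> 0"
    proof
      assume "Q *v w = 0"
      then have "P *v (Q *v w) = 0" by simp
      then show False using PQ w by (simp add: matrix_vector_mul_assoc)
    qed
    have "w \<bullet> (C *v w) = (Q *v w) \<bullet> (B *v (Q *v w))"
      unfolding C_def by (simp only: dot_mat_left QT flip: matrix_vector_mul_assoc)
    then show "w \<bullet> (C *v w) > 0" using B Qw by (simp add: spd_def)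
  qed
  obtain V m where V: "orthogonal_matrix V" and m: "\<forall>i. m i > 0" and Cd: "C = V ** diag_mat m ** transpose V"
    using spd_decomp[OF Cs] by blast
  define W where "W = transpose V ** Q"
  have "y \<bullet> (matrix_inv (geod A B t) *v y) = (\<Sum>j\<in>UNIV. ((W *v y) $ j)^2 * m j powr (-t))" for t y
  proof -
    define R where "R = V ** diag_mat (\<lambda>i. m i powr t) ** transpose V"
    define Ri where "Ri = V ** diag_mat (\<lambda>i. m i powr (-t)) ** transpose V"
    have mC: "mpow C t = R" unfolding R_def by (rule mpow_eq[OF V m Cd])
    have RRi: "R ** Ri = mat 1"
    proof -
      have "(\<lambda>i. m i powr t * m i powr (-t)) = (\<lambda>i. 1)"
      proof (rule ext)
        fix i show "m i powr t * m i powr (-t) = 1" using m[rule_format, of i]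
          by (simp flip: powr_add)
      qed
      then show ?thesis unfolding R_def Ri_def decomp_mult[OF V]
        using V by (simp only: diag_mat_one matrix_mul_rid orth_right)
    qed
    have g: "geod A B t = P ** R ** P" unfolding geod_def mP mQ C_def[symmetric] mC ..
    have "(P ** R ** P) ** (Q ** Ri ** Q) = P ** R ** (P ** Q) ** Ri ** Q"
      by (simp only: matrix_mul_assoc)
    also have "\<dots> = P ** R ** Ri ** Q" by (simp add: PQ)
    also have "\<dots> = P ** (R ** Ri) ** Q" by (simp only: matrix_mul_assoc)
    also have "\<dots> = mat 1" by (simp add: RRi PQ)
    finally have inv: "matrix_inv (geod A B t) = Q ** Ri ** Q" unfolding g by (rule matrix_inv_eq)
    have "(Q ** Ri ** Q) *v y = (Q ** V) *v (diag_mat (\<lambda>i. m i powr (-t)) *v (W *v y))"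
      unfolding Ri_def W_def by (simp only: matrix_vector_mul_assoc matrix_mul_assoc)
    then have "y \<bullet> ((Q ** Ri ** Q) *v y) = (W *v y) \<bullet> (diag_mat (\<lambda>i. m i powr (-t)) *v (W *v y))"
      by (simp only: dot_mat_left matrix_transpose_mul QT W_def)
    also have "\<dots> = (\<Sum>j\<in>UNIV. ((W *v y) $ j)^2 * m j powr (-t))"
      by (simp add: quad_diag mult.commute)
    finally show ?thesis unfolding inv .
  qed
  then show ?thesis using m by blast
qed

theorem mainTheorem6:
  fixes x :: "nat \<Rightarrow> real^'d" and n :: nat and \<beta> b :: real
  assumes "\<forall>i\<in>{1..n}. x i \<noteq> 0"
    and "\<beta> > 0" and "b > 0"
  defines "g \<equiv> (\<lambda>\<Sigma>::real^'d^'d. \<Sum>i=1..n. ((x i \<bullet> (matrix_inv \<Sigma> *v x i)) / b) powr \<beta>)"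
  shows "convex_on PD g \<and> geodesically_convex g"
proof
  show "convex_on PD g" unfolding g_def
    by (rule convex_on_sum_fun[OF convex_PD]) (use assms in \<open>auto intro: euclid_term\<close>)
  show "geodesically_convex g" unfolding geodesically_convex_def
  proof (intro allI impI)
    fix A B :: "real^'d^'d" assume A: "spd A" and B: "spd B"
    obtain W m where m: "\<forall>j. (m::'d \<Rightarrow> real) j > 0" and
      form: "\<And>t y. y \<bullet> (matrix_inv (geod A B t) *v y) = (\<Sum>j\<in>UNIV. (((W::real^'d^'d) *v y) $ j)^2 * m j powr (-t))"
      using geod_form[OF A B] by blast
    have eq: "(\<lambda>t. g (geod A B t)) = (\<lambda>t. \<Sum>i=1..n. ((\<Sum>j\<in>UNIV. ((W *v x i) $ j)^2 * m j powr (-t)) / b) powr \<beta>)"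
      by (simp add: g_def form)
    show "convex_on {0..1} (\<lambda>t. g (geod A B t))" unfolding eq
      by (rule convex_on_sum_fun) (use assms m in \<open>auto intro!: geod_conv\<close>)
  qed
qed

end
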